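(* For positive integers $a,b$ define $$c_l(a,a+1;b)=1+\frac{1}{a+2[b,a+1,b]},\quad c_r(a,a+1;b)=1+\frac{1}{a+2[b+1,a]},$$ $$c_l(a;b,b+1)=1+\frac{1}{b+2[a,b+1,a]},\quad c_r(a;b,b+1)=1+\frac{1}{b+2[a+1,b]}.$$ Then for every integer $a\ge1$, $$c_l(a,a+1;2a+1)>c_r(a;2a+1,2a+2)^2,$$ and for every integer $a\ge2$, $$c_r(a,a+1;2a)<c_l(a;2a,2a+1)^2.$$
   Context: $[x_1,\ldots,x_k]$ denotes the finite continued fraction $\cfrac{1}{x_1+\cfrac{1}{\ddots+\cfrac1{x_k}}}$. (In the paper these inequalities are the defining conditions for the $(1,2)$-variations $((a\to a+1),(2a+2\to2a+1),(2a+2\to2a+1))$ and $((a+1\to a),(2a\to2a+1),(2a\to2a+1))$ to be "absolutely increasing".) *)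

theory Defs
  imports Complex_Main
begin

text \<open>Finite continued fraction [x1,...,xk] = 1/(x1 + 1/(... + 1/xk)).
  The empty list is never used; it is given the value 0, so that
  cf (x # xs) = 1/(x + cf xs) holds uniformly.\<close>
fun cf :: "real list \<Rightarrow> real" where
  "cf [] = 0"
| "cf (x # xs) = 1 / (x + cf xs)"

definition cl_left :: "real \<Rightarrow> real \<Rightarrow> real" where
  "cl_left a b = 1 + 1 / (a + 2 * cf [b, a + 1, b])"

definition cr_left :: "real \<Rightarrow> real \<Rightarrow> real" where
  "cr_left a b = 1 + 1 / (a + 2 * cf [b + 1, a])"

definition cl_right :: "real \<Rightarrow> real \<Rightarrow> real" where
  "cl_right a b = 1 + 1 / (b + 2 * cf [a, b + 1, a])"

definition cr_right :: "real \<Rightarrow> real \<Rightarrow> real" where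
  "cr_right a b = 1 + 1 / (b + 2 * cf [a + 1, b])"

end

theory Submission imports Defs begin

lemma key: fixes p1 p2 q1 q2 :: real
  assumes "p2>0" "q2>0" "p1*q2^2 - p2*(2*q1*q2+q1^2) > 0"
  shows "1 + p1/p2 > (1+q1/q2)^2"
proof -
  have "(1+q1/q2)^2 = 1 + (2*q1*q2+q1^2)/q2^2" using assms by (simp add: field_simps power2_eq_square)
  moreover have "(2*q1*q2+q1^2)/q2^2 < p1/p2" using assms
    by (simp add: divide_simps) (simp add: algebra_simps)
  ultimately show ?thesis by simp
qed

lemma key2: fixes p1 p2 q1 q2 :: real
  assumes "p2>0" "q2>0" "p2*(2*q1*q2+q1^2) - p1*q2^2 > 0"
  shows "1 + p1/p2 < (1+q1/q2)^2"
proof -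
  have "(1+q1/q2)^2 = 1 + (2*q1*q2+q1^2)/q2^2" using assms by (simp add: field_simps power2_eq_square)
  moreover have "(2*q1*q2+q1^2)/q2^2 > p1/p2" using assms
    by (simp add: divide_simps) (simp add: algebra_simps)
  ultimately show ?thesis by simp
qed

lemma A: fixes t::real assumes t: "t\<ge>0"
  shows "cl_left (t+1) (2*(t+1)+1) > (cr_right (t+1) (2*(t+1)+1))\<^sup>2"
proof -
  define a where "a = t+1"
  define b where "b = 2*a+1"
  define D where "D = (a+1)*b+1"
  have b0: "b>0" using t by (simp add: a_def b_def)
  have D0: "D>0" unfolding D_def using b0 t by (simp add: add_pos_pos a_def)
  have c1: "cf [a+1,b] = b/D" using b0 D0 by (simp add: D_def field_simps)
  have c2: "cf [b,a+1,b] = D/(b*(D+1))" using b0 D0 c1 by (simp add: field_simps)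
  have L: "cl_left a b = 1 + b*(D+1)/(a*b*(D+1)+2*D)"
  proof -
    have "b*(D+1)>0" using b0 D0 by simp
    moreover have "a*b*(D+1)+2*D>0" using b0 D0 t by (simp add: add_pos_pos a_def)
    ultimately show ?thesis unfolding cl_left_def c2 by (simp add: field_simps)
  qed
  have R: "cr_right a b = 1 + D/(b*(D+2))"
    unfolding cr_right_def c1 using b0 D0 by (simp add: field_simps)
  have e1: "b*(D+1) = 24 + 37*t + 20*t^2 + 4*t^3" by (simp add: a_def b_def D_def algebra_simps power2_eq_square power3_eq_cube)
  have e2: "a*b*(D+1)+2*D = 38 + 75*t + 61*t^2 + 24*t^3 + 4*t^4" by (simp add: a_def b_def D_def algebra_simps power2_eq_square power3_eq_cube power4_eq_xxxx)
  have e3: "D = 7 + 7*t + 2*t^2" by (simp add: a_def b_def D_def algebra_simps power2_eq_square)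
  have e4: "b*(D+2) = 27 + 39*t + 20*t^2 + 4*t^3" by (simp add: a_def b_def D_def algebra_simps power2_eq_square power3_eq_cube)
  have "1 + (24 + 37*t + 20*t^2 + 4*t^3)/(38 + 75*t + 61*t^2 + 24*t^3 + 4*t^4) > (1 + (7 + 7*t + 2*t^2)/(27 + 39*t + 20*t^2 + 4*t^3))^2"
  proof (rule key)
    show "38 + 75*t + 61*t^2 + 24*t^3 + 4*t^4 > 0" using t by (simp add: add_pos_nonneg)
    show "27 + 39*t + 20*t^2 + 4*t^3 > 0" using t by (simp add: add_pos_nonneg)
    have "(24 + 37*t + 20*t^2 + 4*t^3) * (27 + 39*t + 20*t^2 + 4*t^3)^2 - (38 + 75*t + 61*t^2 + 24*t^3 + 4*t^4) * (2*(7 + 7*t + 2*t^2)*(27 + 39*t + 20*t^2 + 4*t^3) + (7 + 7*t + 2*t^2)^2)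
      = 1270 + 6656*t + 13811*t^2 + 15722*t^3 + 11017*t^4 + 4928*t^5 + 1384*t^6 + 224*t^7 + 16*t^8"
      by (simp add: algebra_simps power2_eq_square power3_eq_cube power4_eq_xxxx power_numeral_reduce)
    also have "\<dots> > 0" using t by (simp add: add_pos_nonneg)
    finally show "(24 + 37*t + 20*t^2 + 4*t^3) * (27 + 39*t + 20*t^2 + 4*t^3)^2 - (38 + 75*t + 61*t^2 + 24*t^3 + 4*t^4) * (2*(7 + 7*t + 2*t^2)*(27 + 39*t + 20*t^2 + 4*t^3) + (7 + 7*t + 2*t^2)^2) > 0" .
  qed
  then have "cl_left a b > (cr_right a b)^2" 
  proof -
    have L': "cl_left a b = 1 + (24 + 37*t + 20*t^2 + 4*t^3)/(38 + 75*t + 61*t^2 + 24*t^3 + 4*t^4)" by (simp only: L e1 e2)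
    have R': "cr_right a b = 1 + (7 + 7*t + 2*t^2)/(27 + 39*t + 20*t^2 + 4*t^3)" by (subst R, subst e4, subst e3, rule refl)
    show ?thesis unfolding L' R' by fact
  qed
  then show ?thesis by (simp add: a_def b_def)
qed

lemma B: fixes t::real assumes t: "t\<ge>0"
  shows "cr_left (t+2) (2*(t+2)) < (cl_right (t+2) (2*(t+2)))\<^sup>2"
proof -
  define a where "a = t+2"
  define b where "b = 2*a"
  define E where "E = (b+1)*a+1"
  have a0: "a>0" using t by (simp add: a_def)
  have b0: "b>0" using t by (simp add: a_def b_def)
  have E0: "E>0" unfolding E_def using b0 a0 by (simp add: add_pos_pos)
  have c1: "cf [b+1,a] = a/E" using a0 E0 by (simp add: E_def field_simps)
  have c2: "cf [a,b+1,a] = E/(a*(E+1))" using a0 E0 c1 by (simp add: field_simps)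
  have R: "cl_right a b = 1 + a*(E+1)/(a*b*(E+1)+2*E)"
  proof -
    have "a*(E+1)>0" using a0 E0 by simp
    moreover have "a*b*(E+1)+2*E>0" using a0 b0 E0 by (simp add: add_pos_pos)
    ultimately show ?thesis unfolding cl_right_def c2 by (simp add: field_simps)
  qed
  have L: "cr_left a b = 1 + E/(a*(E+2))"
    unfolding cr_left_def c1 using a0 E0 by (simp add: field_simps)
  have e1: "a*(E+1) = 24 + 30*t + 13*t^2 + 2*t^3" by (simp add: a_def b_def E_def algebra_simps power2_eq_square power3_eq_cube)
  have e2: "a*b*(E+1)+2*E = 118 + 186*t + 116*t^2 + 34*t^3 + 4*t^4" by (simp add: a_def b_def E_def algebra_simps power2_eq_square power3_eq_cube power4_eq_xxxx)
  have e3: "E = 11 + 9*t + 2*t^2" by (simp add: a_def b_def E_def algebra_simps power2_eq_square)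
  have e4: "a*(E+2) = 26 + 31*t + 13*t^2 + 2*t^3" by (simp add: a_def b_def E_def algebra_simps power2_eq_square power3_eq_cube)
  have "1 + (11 + 9*t + 2*t^2)/(26 + 31*t + 13*t^2 + 2*t^3) < (1 + (24 + 30*t + 13*t^2 + 2*t^3)/(118 + 186*t + 116*t^2 + 34*t^3 + 4*t^4))^2"
  proof (rule key2)
    show "26 + 31*t + 13*t^2 + 2*t^3 > 0" using t by (simp add: add_pos_nonneg)
    show "118 + 186*t + 116*t^2 + 34*t^3 + 4*t^4 > 0" using t by (simp add: add_pos_nonneg)
    have "(26 + 31*t + 13*t^2 + 2*t^3) * (2*(24 + 30*t + 13*t^2 + 2*t^3)*(118 + 186*t + 116*t^2 + 34*t^3 + 4*t^4) + (24 + 30*t + 13*t^2 + 2*t^3)^2) - (11 + 9*t + 2*t^2) * (118 + 186*t + 116*t^2 + 34*t^3 + 4*t^4)^2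
      = 9076 + 38916*t + 71724*t^2 + 75924*t^3 + 51362*t^4 + 23159*t^5 + 6985*t^6 + 1362*t^7 + 156*t^8 + 8*t^9"
      by (simp add: algebra_simps power2_eq_square power3_eq_cube power4_eq_xxxx power_numeral_reduce)
    also have "\<dots> > 0" using t by (simp add: add_pos_nonneg)
    finally show "(26 + 31*t + 13*t^2 + 2*t^3) * (2*(24 + 30*t + 13*t^2 + 2*t^3)*(118 + 186*t + 116*t^2 + 34*t^3 + 4*t^4) + (24 + 30*t + 13*t^2 + 2*t^3)^2) - (11 + 9*t + 2*t^2) * (118 + 186*t + 116*t^2 + 34*t^3 + 4*t^4)^2 > 0" .
  qed
  then have "cr_left a b < (cl_right a b)^2"
  proof -
    have L': "cr_left a b = 1 + (11 + 9*t + 2*t^2)/(26 + 31*t + 13*t^2 + 2*t^3)" by (subst L, subst e4, subst e3, rule refl)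
    have R': "cl_right a b = 1 + (24 + 30*t + 13*t^2 + 2*t^3)/(118 + 186*t + 116*t^2 + 34*t^3 + 4*t^4)" by (subst R, subst e1, subst e2, rule refl)
    show ?thesis unfolding L' R' by fact
  qed
  then show ?thesis by (simp add: a_def b_def)
qed

theorem lemma13:
  shows "(\<forall>a::nat. a \<ge> 1 \<longrightarrow>
           cl_left (real a) (real (2*a+1)) > (cr_right (real a) (real (2*a+1)))\<^sup>2)
       \<and> (\<forall>a::nat. a \<ge> 2 \<longrightarrow>
           cr_left (real a) (real (2*a)) < (cl_right (real a) (real (2*a)))\<^sup>2)"
proof safe
  fix a :: nat assume "a \<ge> 1"
  then have "real a = (real a - 1) + 1" "real a - 1 \<ge> 0" by auto
  from A[OF this(2)] show "cl_left (real a) (real (2*a+1)) > (cr_right (real a) (real (2*a+1)))\<^sup>2"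
    by (simp add: add.commute)
next
  fix a :: nat assume "a \<ge> 2"
  then have "real a - 2 \<ge> 0" by auto
  from B[OF this] show "cr_left (real a) (real (2*a)) < (cl_right (real a) (real (2*a)))\<^sup>2"
    by simp
qed
end
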